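(* Suppose that $n\ge 6$ is even and that $H$ is a $3$-uniform hypergraph on $n$ vertices. If for every vertex $v$ of $H$ the hypergraph $H\setminus v$ is isomorphic to $B_{n-1}$, then $H\cong B_n$.
   Context: $H\setminus v$ is obtained by deleting $v$ and all edges containing it. For $m\ge 1$, $B_m$ is the $3$-uniform hypergraph on $m$ vertices with a partition $V=X\cup Y$ into disjoint sets with $||X|-|Y||\le 1$ whose edges are exactly the triples meeting both $X$ and $Y$. *)

theory Defs
  imports Main
begin

definition uniform3 :: "'a set \<times> 'a set set \<Rightarrow> bool" where
  "uniform3 H \<longleftrightarrow> finite (fst H) \<and> (\<forall>e \<in> snd H. e \<subseteq> fst H \<and> card e = 3)"

definition del_vertex :: "'a set \<times> 'a set set \<Rightarrow> 'a \<Rightarrow> 'a set \<times> 'a set set" where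
  "del_vertex H v = (fst H - {v}, {e \<in> snd H. v \<notin> e})"

definition hg_iso :: "'a set \<times> 'a set set \<Rightarrow> 'b set \<times> 'b set set \<Rightarrow> bool" where
  "hg_iso H G \<longleftrightarrow> (\<exists>f. bij_betw f (fst H) (fst G) \<and>
      (\<forall>e. e \<subseteq> fst H \<longrightarrow> (e \<in> snd H \<longleftrightarrow> f ` e \<in> snd G)))"

text \<open>The hypergraph B_m on vertex set {0..<m}, with X = {0..<m div 2} and
Y = {m div 2..<m} (so ||X|-|Y|| \<le> 1); edges are the triples meeting both X and Y.
Any two such partitions give isomorphic hypergraphs, so this is B_m up to isomorphism.\<close>

definition B :: "nat \<Rightarrow> nat set \<times> nat set set" where
  "B m = ({0..<m}, {e. e \<subseteq> {0..<m} \<and> card e = 3 \<and>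
           e \<inter> {0..<m div 2} \<noteq> {} \<and> e \<inter> {m div 2..<m} \<noteq> {}})"

end

theory Submission imports Defs begin

lemma side_lemma:
  assumes iso: "hg_iso (del_vertex (V,E) v) (B (2*k+1))"
  shows "\<exists>s. (\<forall>a b c. a\<in>V-{v} \<longrightarrow> b\<in>V-{v} \<longrightarrow> c\<in>V-{v} \<longrightarrow> a\<noteq>b \<longrightarrow> a\<noteq>c \<longrightarrow> b\<noteq>c \<longrightarrow>
      ({a,b,c}\<in>E \<longleftrightarrow> \<not>(s a = s b \<and> s b = s c))) \<and> card {u\<in>V-{v}. \<not> s u} = k+1"
proof -
  obtain f where bij: "bij_betw f (V-{v}) {0..<2*k+1}"
    and ed: "\<forall>e. e \<subseteq> V-{v} \<longrightarrow> ((e \<in> E \<and> v \<notin> e) \<longleftrightarrow> f ` e \<in> snd (B (2*k+1)))"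
    using iso unfolding hg_iso_def del_vertex_def B_def by auto
  have dk: "(2*k+1) div 2 = k" by simp
  have inj: "inj_on f (V-{v})" using bij bij_betw_def by blast
  have P1: "\<forall>a b c. a\<in>V-{v} \<longrightarrow> b\<in>V-{v} \<longrightarrow> c\<in>V-{v} \<longrightarrow> a\<noteq>b \<longrightarrow> a\<noteq>c \<longrightarrow> b\<noteq>c \<longrightarrow>
      ({a,b,c}\<in>E \<longleftrightarrow> \<not>((f a < k) = (f b < k) \<and> (f b < k) = (f c < k)))"
  proof (intro allI impI)
    fix a b c assume h: "a\<in>V-{v}" "b\<in>V-{v}" "c\<in>V-{v}" "a\<noteq>b" "a\<noteq>c" "b\<noteq>c"
    have d: "f a \<noteq> f b" "f a \<noteq> f c" "f b \<noteq> f c" using inj h by (meson inj_on_def)+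
    have r: "f a < 2*k+1" "f b < 2*k+1" "f c < 2*k+1" using bij h bij_betwE by fastforce+
    have sub: "{a,b,c} \<subseteq> V-{v}" using h by blast
    have "({a,b,c} \<in> E \<and> v \<notin> {a,b,c}) \<longleftrightarrow> f ` {a,b,c} \<in> snd (B (2*k+1))"
      using ed sub by blast
    moreover have "v \<notin> {a,b,c}" using h by auto
    moreover have "f ` {a,b,c} \<in> snd (B (2*k+1)) \<longleftrightarrow> \<not>((f a < k) = (f b < k) \<and> (f b < k) = (f c < k))"
    proof -
      have c3: "card {f a, f b, f c} = 3" using d by simp
      have s1: "{f a, f b, f c} \<subseteq> {0..<2*k+1}" using r by auto
      have "f ` {a,b,c} \<in> snd (B (2*k+1)) \<longleftrightarrow> ({f a, f b, f c} \<inter> {0..<k} \<noteq> {} \<and> {f a, f b, f c} \<inter> {k..<2*k+1} \<noteq> {})"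
        unfolding B_def dk using c3 s1 by simp
      also have "\<dots> \<longleftrightarrow> \<not>((f a < k) = (f b < k) \<and> (f b < k) = (f c < k))"
        using r by auto
      finally show ?thesis .
    qed
    ultimately show "({a,b,c}\<in>E \<longleftrightarrow> \<not>((f a < k) = (f b < k) \<and> (f b < k) = (f c < k)))" by blast
  qed
  have im: "f ` {u\<in>V-{v}. \<not> f u < k} = {k..<2*k+1}"
    using bij unfolding bij_betw_def by force
  have "card {u\<in>V-{v}. \<not> f u < k} = card {k..<2*k+1}"
    by (metis (no_types, lifting) card_image im inj inj_on_subset mem_Collect_eq subsetI)
  then have "card {u\<in>V-{v}. \<not> f u < k} = k+1" by simp
  then show ?thesis using P1 by (intro exI[of _ "\<lambda>u. f u < k"]) blast
qed

lemma card_ins_le: "finite A \<Longrightarrow> card (insert x A) \<le> Suc (card A)"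
  by (simp add: card_insert_if)

lemma card5: "card {a,b,c,d,e} \<le> (5::nat)"
proof -
  have 1: "card {a,b,c,d,e} \<le> Suc (card {b,c,d,e})" by (rule card_ins_le) simp
  have 2: "card {b,c,d,e} \<le> Suc (card {c,d,e})" by (rule card_ins_le) simp
  have 3: "card {c,d,e} \<le> Suc (card {d,e})" by (rule card_ins_le) simp
  have 4: "card {d,e} \<le> Suc (card {e})" by (rule card_ins_le) simp
  show ?thesis using 1 2 3 4 by simp
qed

theorem lemma2p5:
  fixes H :: "'a set \<times> 'a set set" and n :: nat
  assumes "n \<ge> 6" and "even n"
    and "uniform3 H" and "card (fst H) = n"
    and "\<forall>v \<in> fst H. hg_iso (del_vertex H v) (B (n - 1))"
  shows "hg_iso H (B n)"
proof -
  obtain V E where H: "H = (V,E)" by fastforce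
  define k where "k = (n-2) div 2"
  have nk: "n = 2*k+2" and k2: "k \<ge> 2" using assms(1,2) unfolding k_def by auto
  have finV: "finite V" and Eu: "\<forall>e\<in>E. e \<subseteq> V \<and> card e = 3" using assms(3) H unfolding uniform3_def by auto
  have cV: "card V = n" using assms(4) H by simp
  have isos: "\<forall>v\<in>V. hg_iso (del_vertex (V,E) v) (B (2*k+1))" using assms(5) H nk by simp
  have "\<forall>v\<in>V. \<exists>s. (\<forall>a b c. a\<in>V-{v} \<longrightarrow> b\<in>V-{v} \<longrightarrow> c\<in>V-{v} \<longrightarrow> a\<noteq>b \<longrightarrow> a\<noteq>c \<longrightarrow> b\<noteq>c \<longrightarrow>
      ({a,b,c}\<in>E \<longleftrightarrow> \<not>(s a = s b \<and> s b = s c))) \<and> card {u\<in>V-{v}. \<not> s u} = k+1"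
  proof
    fix v assume "v \<in> V"
    show "\<exists>s. (\<forall>a b c. a\<in>V-{v} \<longrightarrow> b\<in>V-{v} \<longrightarrow> c\<in>V-{v} \<longrightarrow> a\<noteq>b \<longrightarrow> a\<noteq>c \<longrightarrow> b\<noteq>c \<longrightarrow>
      ({a,b,c}\<in>E \<longleftrightarrow> \<not>(s a = s b \<and> s b = s c))) \<and> card {u\<in>V-{v}. \<not> s u} = k+1"
      by (rule side_lemma) (rule isos[rule_format, OF \<open>v \<in> V\<close>])
  qed
  from bchoice[OF this] obtain S where S: "\<forall>v\<in>V. (\<forall>a b c. a\<in>V-{v} \<longrightarrow> b\<in>V-{v} \<longrightarrow> c\<in>V-{v} \<longrightarrow> a\<noteq>b \<longrightarrow> a\<noteq>c \<longrightarrow> b\<noteq>c \<longrightarrow>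
      ({a,b,c}\<in>E \<longleftrightarrow> \<not>(S v a = S v b \<and> S v b = S v c))) \<and> card {u\<in>V-{v}. \<not> S v u} = k+1"
    by (rule exE)
  have Sd: "\<And>v a b c. v\<in>V \<Longrightarrow> a\<in>V-{v} \<Longrightarrow> b\<in>V-{v} \<Longrightarrow> c\<in>V-{v} \<Longrightarrow> a\<noteq>b \<Longrightarrow> a\<noteq>c \<Longrightarrow> b\<noteq>c \<Longrightarrow>
      ({a,b,c}\<in>E \<longleftrightarrow> \<not>(S v a = S v b \<and> S v b = S v c))"
  proof -
    fix v a b c assume "v\<in>V" "a\<in>V-{v}" "b\<in>V-{v}" "c\<in>V-{v}" "a\<noteq>b" "a\<noteq>c" "b\<noteq>c"
    then show "({a,b,c}\<in>E \<longleftrightarrow> \<not>(S v a = S v b \<and> S v b = S v c))"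
      using S[rule_format, OF \<open>v\<in>V\<close>] by blast
  qed
  define Y where "Y v = {u\<in>V-{v}. \<not> S v u}" for v
  have cY: "\<And>v. v \<in> V \<Longrightarrow> card (Y v) = k+1" unfolding Y_def using S by simp
  have finY: "\<And>v. finite (Y v)" using finV unfolding Y_def by simp
  have YV: "\<And>v. Y v \<subseteq> V - {v}" unfolding Y_def by blast
  define R where "R a b \<longleftrightarrow> a\<in>V \<and> b\<in>V \<and> a\<noteq>b \<and> (\<exists>x\<in>V. x\<noteq>a \<and> x\<noteq>b \<and> {a,b,x} \<notin> E)" for a b
  have RV: "\<And>a b. R a b \<Longrightarrow> a \<in> V \<and> b \<in> V \<and> a \<noteq> b" unfolding R_def by simp
  have RE: "\<And>a b. R a b \<Longrightarrow> \<exists>x. x\<in>V \<and> x\<noteq>a \<and> x\<noteq>b \<and> {a,b,x} \<notin> E" unfolding R_def by blast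
  have RI: "\<And>a b x. a\<in>V \<Longrightarrow> b\<in>V \<Longrightarrow> x\<in>V \<Longrightarrow> a\<noteq>b \<Longrightarrow> x\<noteq>a \<Longrightarrow> x\<noteq>b \<Longrightarrow> {a,b,x} \<notin> E \<Longrightarrow> R a b"
    unfolding R_def by blast
  have Rsym: "\<And>a b. R a b \<Longrightarrow> R b a"
  proof -
    fix a b assume h: "R a b"
    obtain x where x: "x\<in>V" "x\<noteq>a" "x\<noteq>b" "{a,b,x} \<notin> E" using RE[OF h] by blast
    have "{b,a,x} \<notin> E" using x(4) by (simp add: insert_commute)
    then show "R b a" using RI[of b a x] RV[OF h] x by blast
  qed
  have third: "\<And>(A::'a set) a b. finite A \<Longrightarrow> card A \<ge> 3 \<Longrightarrow> \<exists>c\<in>A. c \<noteq> a \<and> c \<noteq> b"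
  proof -
    fix A :: "'a set" and a b assume fA: "finite A" and cA: "card A \<ge> 3"
    show "\<exists>c\<in>A. c \<noteq> a \<and> c \<noteq> b"
    proof (rule ccontr)
      assume "\<not> (\<exists>c\<in>A. c \<noteq> a \<and> c \<noteq> b)"
      then have "A \<subseteq> {a,b}" by blast
      then have "card A \<le> card {a,b}" by (intro card_mono) auto
      also have "card {a,b} \<le> 2" by (simp add: card_insert_if)
      finally have "card A \<le> 2" .
      then show False using cA by simp
    qed
  qed
  have T: "\<And>a b c. R a b \<Longrightarrow> R b c \<Longrightarrow> a \<noteq> c \<Longrightarrow> {a,b,c} \<notin> E"
  proof -
    fix a b c assume ab: "R a b" and bc: "R b c" and ac: "a \<noteq> c"
    obtain x where x: "x\<in>V" "x\<noteq>a" "x\<noteq>b" "{a,b,x} \<notin> E" using RE[OF ab] by blast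
    obtain y where y: "y\<in>V" "y\<noteq>b" "y\<noteq>c" "{b,c,y} \<notin> E" using RE[OF bc] by blast
    have "card {a,b,c,x,y} \<le> 5" by (rule card5)
    then have "card {a,b,c,x,y} < card V" using cV assms(1) by simp
    then have "\<not> V \<subseteq> {a,b,c,x,y}" using finV by (meson card_mono finite.emptyI finite_insert not_le)
    then obtain v where v: "v \<in> V" "v \<notin> {a,b,c,x,y}" by blast
    have in5: "a \<in> V" "b \<in> V" "c \<in> V" using RV[OF ab] RV[OF bc] by auto
    have "S v a = S v b \<and> S v b = S v x" using Sd[of v a b x] v x in5 RV[OF ab] by auto
    moreover have "S v b = S v c \<and> S v c = S v y" using Sd[of v b c y] v y in5 RV[OF bc] by auto
    ultimately show "{a,b,c} \<notin> E" using Sd[of v a b c] v in5 RV[OF ab] RV[OF bc] ac by auto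
  qed
  have T': "\<And>a b c. R a b \<Longrightarrow> R b c \<Longrightarrow> a \<noteq> c \<Longrightarrow> R a c"
  proof -
    fix a b c assume h: "R a b" "R b c" "a \<noteq> c"
    have "{a,c,b} \<notin> E" using T[OF h] by (metis insert_commute)
    then show "R a c" using RI[of a c b] RV[OF h(1)] RV[OF h(2)] h(3) by blast
  qed
  have Ypair: "\<And>w b c. w \<in> V \<Longrightarrow> b \<in> Y w \<Longrightarrow> c \<in> Y w \<Longrightarrow> b \<noteq> c \<Longrightarrow> R b c"
  proof -
    fix w b c assume h: "w \<in> V" "b \<in> Y w" "c \<in> Y w" "b \<noteq> c"
    obtain z where z: "z \<in> Y w" "z \<noteq> b" "z \<noteq> c" using third[OF finY, of w b c] cY[OF h(1)] k2 by auto
    have "{b,c,z} \<notin> E" using Sd[of w b c z] h z unfolding Y_def by auto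
    then show "R b c" using RI[of b c z] h z YV by blast
  qed
  have Yclosed: "\<And>w a b. w \<in> V \<Longrightarrow> b \<in> Y w \<Longrightarrow> R b a \<Longrightarrow> a \<noteq> w \<Longrightarrow> a \<in> Y w"
  proof -
    fix w a b assume h: "w \<in> V" "b \<in> Y w" "R b a" "a \<noteq> w"
    obtain c where c: "c \<in> Y w" "c \<noteq> a" "c \<noteq> b" using third[OF finY, of w a b] cY[OF h(1)] k2 by auto
    have "R a c" using T'[OF Rsym[OF h(3)] Ypair[OF h(1) h(2) c(1)]] c by auto
    have "{a,b,c} \<notin> E" using T[OF Rsym[OF h(3)] Ypair[OF h(1) h(2) c(1)]] c by auto
    moreover have "a \<in> V" using RV[OF h(3)] by simp
    moreover have "a \<noteq> b" using RV[OF h(3)] by blast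
    ultimately have "S w a = S w b" using Sd[of w a b c] h c YV by blast
    then show "a \<in> Y w" using h \<open>a \<in> V\<close> unfolding Y_def by auto
  qed
  obtain v0 where v0: "v0 \<in> V" using cV assms(1) by fastforce
  obtain y0 where y0: "y0 \<in> Y v0" using cY[OF v0] by fastforce
  have y0V: "y0 \<in> V" using y0 YV by blast
  define K where "K = {u\<in>V. u = y0 \<or> R y0 u}"
  have KV: "K \<subseteq> V" unfolding K_def by blast
  have Kclosed: "\<And>a b. a \<in> K \<Longrightarrow> R a b \<Longrightarrow> b \<in> K"
  proof -
    fix a b assume h: "a \<in> K" "R a b"
    have bV: "b \<in> V" using RV[OF h(2)] by simp
    show "b \<in> K"
    proof (cases "b = y0 \<or> a = y0")
      case True then show ?thesis using h bV unfolding K_def by auto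
    next
      case False
      then have "R y0 a" using h unfolding K_def by auto
      then have "R y0 b" using T'[OF _ h(2)] False by auto
      then show ?thesis using bV unfolding K_def by auto
    qed
  qed
  have Kpair: "\<And>a b. a \<in> K \<Longrightarrow> b \<in> K \<Longrightarrow> a \<noteq> b \<Longrightarrow> R a b"
  proof -
    fix a b assume h: "a \<in> K" "b \<in> K" "a \<noteq> b"
    show "R a b"
    proof (cases "a = y0")
      case True then show ?thesis using h unfolding K_def by auto
    next
      case False
      then have ra: "R a y0" using h Rsym unfolding K_def by auto
      show ?thesis
      proof (cases "b = y0")
        case True then show ?thesis using ra by simp
      next
        case False then have "R y0 b" using h unfolding K_def by auto
        then show ?thesis using T'[OF ra] h by auto
      qed
    qed
  qed
  have KY: "\<And>w. w \<in> V \<Longrightarrow> Y w \<inter> K \<noteq> {} \<Longrightarrow> K - {w} = Y w"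
  proof -
    fix w assume w: "w \<in> V" "Y w \<inter> K \<noteq> {}"
    then obtain y where y: "y \<in> Y w" "y \<in> K" by blast
    show "K - {w} = Y w"
    proof
      show "K - {w} \<subseteq> Y w"
      proof
        fix u assume u: "u \<in> K - {w}"
        show "u \<in> Y w"
        proof (cases "u = y")
          case True then show ?thesis using y by simp
        next
          case False then show ?thesis using Yclosed[OF w(1) y(1) Kpair[OF y(2), of u]] u by auto
        qed
      qed
    next
      show "Y w \<subseteq> K - {w}"
      proof
        fix u assume u: "u \<in> Y w"
        have "u \<noteq> w" using u YV by blast
        moreover have "u \<in> K"
        proof (cases "u = y")
          case True then show ?thesis using y by simp
        next
          case False then show ?thesis using Kclosed[OF y(2) Ypair[OF w(1) y(1) u]] by auto
        qed
        ultimately show "u \<in> K - {w}" by simp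
      qed
    qed
  qed
  have y0K: "y0 \<in> K" using y0V unfolding K_def by simp
  have KY0: "K - {v0} = Y v0" using KY[OF v0] y0 y0K by blast
  have finK: "finite K" using finV KV finite_subset by blast
  have cVK: "card (V - K) = n - card K" using KV finK cV by (simp add: card_Diff_subset)
  have v0K: "v0 \<notin> K"
  proof
    assume v0K: "v0 \<in> K"
    have "card (K - {v0}) = card K - 1" using v0K by (simp add: card_Diff_singleton)
    moreover have "card K > 0" using v0K finK card_gt_0_iff by blast
    ultimately have cK: "card K = k+2" using KY0 cY[OF v0] by simp
    have "card (V - K) = k" using cVK cK nk by simp
    then have "V - K \<noteq> {}" using k2 by (metis card.empty not_numeral_le_zero)
    then obtain w where w: "w \<in> V" "w \<notin> K" by blast
    show False
    proof (cases "Y w \<inter> K = {}")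
      case False
      then have "Y w = K" using KY[OF w(1)] w(2) by auto
      then show False using cY[OF w(1)] cK by simp
    next
      case True
      then have "Y w \<subseteq> V - K - {w}" using YV by blast
      then have "card (Y w) \<le> card (V - K - {w})" using finV by (meson card_mono finite_Diff)
      also have "\<dots> = k - 1" using \<open>card (V - K) = k\<close> w by simp
      finally show False using cY[OF w(1)] by simp
    qed
  qed
  have KY0': "K = Y v0" using KY0 v0K by simp
  have cK: "card K = k+1" using KY0' cY[OF v0] by simp
  define D where "D = V - K"
  have cD: "card D = k+1" using cVK cK nk unfolding D_def by simp
  have YD: "Y y0 = D"
  proof (cases "Y y0 \<inter> K = {}")
    case False
    then have "Y y0 = K - {y0}" using KY[OF y0V] by auto
    then show ?thesis using cY[OF y0V] cK y0K finK by simp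
  next
    case True
    then have "Y y0 \<subseteq> D" using YV unfolding D_def by blast
    moreover have "finite D" using finV unfolding D_def by simp
    ultimately show ?thesis using cY[OF y0V] cD by (simp add: card_subset_eq)
  qed
  have Dpair: "\<And>a b. a \<in> D \<Longrightarrow> b \<in> D \<Longrightarrow> a \<noteq> b \<Longrightarrow> R a b" using Ypair[OF y0V] YD by blast
  have edge: "\<And>e. e \<subseteq> V \<Longrightarrow> (e \<in> E \<longleftrightarrow> card e = 3 \<and> \<not> e \<subseteq> K \<and> \<not> e \<subseteq> D)"
  proof -
    fix e assume eV: "e \<subseteq> V"
    show "e \<in> E \<longleftrightarrow> card e = 3 \<and> \<not> e \<subseteq> K \<and> \<not> e \<subseteq> D"
    proof
      assume eE: "e \<in> E"
      then have c3: "card e = 3" using Eu by blast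
      then obtain a b c where e: "e = {a,b,c}" "a \<noteq> b" "b \<noteq> c" "a \<noteq> c" by (metis card_3_iff)
      have "\<not> e \<subseteq> K"
      proof
        assume "e \<subseteq> K"
        then have "{a,b,c} \<notin> E" using T[OF Kpair Kpair] e by auto
        then show False using eE e by simp
      qed
      moreover have "\<not> e \<subseteq> D"
      proof
        assume "e \<subseteq> D"
        then have "{a,b,c} \<notin> E" using T[OF Dpair Dpair] e by auto
        then show False using eE e by simp
      qed
      ultimately show "card e = 3 \<and> \<not> e \<subseteq> K \<and> \<not> e \<subseteq> D" using c3 by simp
    next
      assume h: "card e = 3 \<and> \<not> e \<subseteq> K \<and> \<not> e \<subseteq> D"
      then obtain a b c where e: "e = {a,b,c}" "a \<noteq> b" "b \<noteq> c" "a \<noteq> c" by (metis card_3_iff)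
      show "e \<in> E"
      proof (rule ccontr)
        assume ne: "e \<notin> E"
        have abc: "a \<in> V" "b \<in> V" "c \<in> V" using eV e by auto
        have Rab: "R a b" using ne e abc by (intro RI[of a b c]) auto
        have Rac: "R a c" using ne e abc by (intro RI[of a c b]) (auto simp: insert_commute)
        show False
        proof (cases "a \<in> K")
          case True
          then have "b \<in> K" "c \<in> K" using Kclosed Rab Rac by auto
          then show False using h e True by auto
        next
          case False
          then have "b \<notin> K" "c \<notin> K" using Kclosed Rsym Rab Rac by blast+
          then show False using h e False abc unfolding D_def by auto
        qed
      qed
    qed
  qed
  have finD: "finite D" using finV unfolding D_def by simp
  obtain g1 where g1: "bij_betw g1 K {0..<k+1}" using finite_same_card_bij[OF finK, of "{0..<k+1}"] cK by auto
  obtain g2 where g2: "bij_betw g2 D {k+1..<n}" using finite_same_card_bij[OF finD, of "{k+1..<n}"] cD nk by auto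
  define g where "g x = (if x \<in> K then g1 x else g2 x)" for x
  have gb1: "bij_betw g K {0..<k+1}" using g1 unfolding g_def by (rule bij_betw_cong[THEN iffD1, rotated]) simp
  have gb2: "bij_betw g D {k+1..<n}" using g2 unfolding D_def g_def by (rule bij_betw_cong[THEN iffD1, rotated]) simp
  have "bij_betw g (K \<union> D) ({0..<k+1} \<union> {k+1..<n})" by (rule bij_betw_combine[OF gb1 gb2]) auto
  moreover have "K \<union> D = V" using KV unfolding D_def by blast
  moreover have "{0..<k+1} \<union> {k+1..<n} = {0..<n}" using nk by auto
  ultimately have gb: "bij_betw g V {0..<n}" by simp
  have glow: "\<And>x. x \<in> V \<Longrightarrow> (g x < k+1 \<longleftrightarrow> x \<in> K)"
  proof -
    fix x assume x: "x \<in> V"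
    show "g x < k+1 \<longleftrightarrow> x \<in> K"
    proof (cases "x \<in> K")
      case True then show ?thesis using gb1 bij_betwE by fastforce
    next
      case False then have "x \<in> D" using x unfolding D_def by simp
      then show ?thesis using gb2 bij_betwE False by fastforce
    qed
  qed
  have gn: "\<And>x. x \<in> V \<Longrightarrow> g x < n" using gb bij_betwE by fastforce
  have ndiv: "n div 2 = k+1" using nk by simp
  show ?thesis unfolding H hg_iso_def fst_conv snd_conv
  proof (intro exI conjI allI impI)
    show "bij_betw g V (fst (B n))" using gb unfolding B_def by simp
    fix e assume eV: "e \<subseteq> V"
    have inj: "inj_on g e" using gb eV unfolding bij_betw_def by (meson inj_on_subset)
    have ce: "card (g ` e) = card e" using card_image[OF inj] .
    have s1: "g ` e \<subseteq> {0..<n}" using gn eV by auto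
    have s2: "g ` e \<inter> {0..<n div 2} \<noteq> {} \<longleftrightarrow> \<not> e \<subseteq> D"
    proof
      assume "g ` e \<inter> {0..<n div 2} \<noteq> {}"
      then obtain x where x: "x \<in> e" "g x < k+1" unfolding ndiv by auto
      then have "x \<in> K" using glow eV by blast
      then show "\<not> e \<subseteq> D" using x unfolding D_def by blast
    next
      assume "\<not> e \<subseteq> D"
      then obtain x where x: "x \<in> e" "x \<notin> D" by blast
      then have "x \<in> K" using eV unfolding D_def by blast
      then have "g x < k+1" using glow eV x by blast
      then have "g x \<in> g ` e \<inter> {0..<n div 2}" using x unfolding ndiv by simp
      then show "g ` e \<inter> {0..<n div 2} \<noteq> {}" by blast
    qed
    have s3: "g ` e \<inter> {n div 2..<n} \<noteq> {} \<longleftrightarrow> \<not> e \<subseteq> K"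
    proof
      assume "g ` e \<inter> {n div 2..<n} \<noteq> {}"
      then obtain x where x: "x \<in> e" "k+1 \<le> g x" unfolding ndiv by auto
      then have "x \<notin> K" using glow eV by fastforce
      then show "\<not> e \<subseteq> K" using x by blast
    next
      assume "\<not> e \<subseteq> K"
      then obtain x where x: "x \<in> e" "x \<notin> K" by blast
      then have "\<not> g x < k+1" "g x < n" using glow gn eV x by blast+
      then have "g x \<in> g ` e \<inter> {n div 2..<n}" using x unfolding ndiv by simp
      then show "g ` e \<inter> {n div 2..<n} \<noteq> {}" by blast
    qed
    show "e \<in> E \<longleftrightarrow> g ` e \<in> snd (B n)"
      unfolding edge[OF eV] B_def snd_conv mem_Collect_eq using ce s1 s2 s3 by auto
  qed
qed

end
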